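(* Let $X$ be a $G$-space and suppose that for some $k>0$ there is a continuous map $\overline{s_k}\colon P(X/G)\to\mathcal{P}_k(X)$ with $\theta_k\circ\overline{s_k}=\mathrm{id}_{P(X/G)}$. Then $\mathrm{TC}^{G,k+2}(X)\le\mathrm{TC}(X/G)$, and consequently $\mathrm{TC}^{G,\infty}(X)\le\mathrm{TC}(X/G)$.
   Context: All spaces are well-pointed CW complexes, $G$ a topological group acting cellularly. $PX$ is the path space with compact-open topology, $\rho_X\colon X\to X/G$ the orbit map. $\mathcal{P}_k(X)=\{(\gamma_1,\dots,\gamma_k)\in(PX)^k\mid G\gamma_i(1)=G\gamma_{i+1}(0),\ 1\le i\le k-1\}$, and $\pi_k\colon\mathcal{P}_k(X)\to X\times X$, $\pi_k(\gamma_1,\dots,\gamma_k)=(\gamma_1(0),\gamma_k(1))$ (a fibration). The (reduced) sectional category $\mathrm{secat}(f)$ of $f\colon E\to B$ is the least $n\ge0$ such that $B$ has an open cover $U_0,\dots,U_n$ with maps $s_i\colon U_i\to E$ satisfying $f\circ s_i\simeq$ inclusion $U_i\hookrightarrow B$. $\mathrm{TC}(Y)=\mathrm{secat}(PY\to Y\times Y,\ \gamma\mapsto(\gamma(0),\gamma(1)))$ (reduced). $\mathrm{TC}^{G,k}(X)=\mathrm{secat}(\pi_k)$; this is non-increasing in $k$, and $\mathrm{TC}^{G,\infty}(X)=\min_{k\ge1}\mathrm{TC}^{G,k}(X)$. The map $\theta_k\colon\mathcal{P}_k(X)\to P(X/G)$ is $\theta_k(\gamma_1,\dots,\gamma_k)=(\rho_X\circ\gamma_1)*\cdots*(\rho_X\circ\gamma_k)$,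 the concatenation of the projected paths. *)

theory Defs
  imports "HOL-Analysis.Analysis" "HOL-Algebra.Group"
begin

definition top_group :: "'g topology \<Rightarrow> ('g, 'm) monoid_scheme \<Rightarrow> bool" where
  "top_group TG G \<longleftrightarrow> group G \<and> topspace TG = carrier G
     \<and> continuous_map (prod_topology TG TG) TG (\<lambda>(g, h). g \<otimes>\<^bsub>G\<^esub> h)
     \<and> continuous_map TG TG (\<lambda>g. inv\<^bsub>G\<^esub> g)"

definition G_space :: "'g topology \<Rightarrow> ('g, 'm) monoid_scheme \<Rightarrow> ('g \<Rightarrow> 'a \<Rightarrow> 'a) \<Rightarrow> 'a topology \<Rightarrow> bool" where
  "G_space TG G act X \<longleftrightarrow> top_group TG G
     \<and> continuous_map (prod_topology TG X) X (\<lambda>(g, x). act g x)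
     \<and> (\<forall>x\<in>topspace X. act \<one>\<^bsub>G\<^esub> x = x)
     \<and> (\<forall>g\<in>carrier G. \<forall>h\<in>carrier G. \<forall>x\<in>topspace X.
          act (g \<otimes>\<^bsub>G\<^esub> h) x = act g (act h x))"

definition orbit :: "('g, 'm) monoid_scheme \<Rightarrow> ('g \<Rightarrow> 'a \<Rightarrow> 'a) \<Rightarrow> 'a \<Rightarrow> 'a set" where
  "orbit G act x = {act g x | g. g \<in> carrier G}"

definition orbit_space :: "('g, 'm) monoid_scheme \<Rightarrow> ('g \<Rightarrow> 'a \<Rightarrow> 'a) \<Rightarrow> 'a topology \<Rightarrow> 'a set topology" where
  "orbit_space G act X = topology (\<lambda>U. U \<subseteq> orbit G act ` topspace X
      \<and> openin X {x \<in> topspace X. orbit G act x \<in> U})"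

text \<open>Paths are represented by functions on the reals, canonically \<open>undefined\<close> outside [0,1].\<close>
definition paths :: "'a topology \<Rightarrow> (real \<Rightarrow> 'a) set" where
  "paths X = {g. pathin X g \<and> (\<forall>t. t \<notin> {0..1} \<longrightarrow> g t = undefined)}"

definition path_space :: "'a topology \<Rightarrow> (real \<Rightarrow> 'a) topology" where
  "path_space X = topology_generated_by
     {{g \<in> paths X. g ` K \<subseteq> U} | K U. compact K \<and> K \<subseteq> {0..1} \<and> openin X U}"

text \<open>Tuples (gamma_1,...,gamma_k) are functions on {0..<k} (index i stands for gamma_(i+1)).\<close>
definition Pk :: "('g, 'm) monoid_scheme \<Rightarrow> ('g \<Rightarrow> 'a \<Rightarrow> 'a) \<Rightarrow> 'a topology \<Rightarrow> nat
                   \<Rightarrow> (nat \<Rightarrow> real \<Rightarrow> 'a) topology" where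
  "Pk G act X k = subtopology (product_topology (\<lambda>_. path_space X) {..<k})
     {\<gamma>. \<forall>i. Suc i < k \<longrightarrow> orbit G act (\<gamma> i 1) = orbit G act (\<gamma> (Suc i) 0)}"

definition pi_k :: "nat \<Rightarrow> (nat \<Rightarrow> real \<Rightarrow> 'a) \<Rightarrow> 'a \<times> 'a" where
  "pi_k k \<gamma> = (\<gamma> 0 0, \<gamma> (k - 1) 1)"

text \<open>Concatenation of k paths, the i-th one traversed on [i/k, (i+1)/k].\<close>
definition concat_paths :: "nat \<Rightarrow> (nat \<Rightarrow> real \<Rightarrow> 'b) \<Rightarrow> real \<Rightarrow> 'b" where
  "concat_paths k p t = (if t \<in> {0..1}
      then (let i = min (k - 1) (nat \<lfloor>real k * t\<rfloor>) in p i (real k * t - real i))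
      else undefined)"

definition theta_k :: "('g, 'm) monoid_scheme \<Rightarrow> ('g \<Rightarrow> 'a \<Rightarrow> 'a) \<Rightarrow> nat
                        \<Rightarrow> (nat \<Rightarrow> real \<Rightarrow> 'a) \<Rightarrow> real \<Rightarrow> 'a set" where
  "theta_k G act k \<gamma> = concat_paths k (\<lambda>i. orbit G act \<circ> \<gamma> i)"

text \<open>Reduced sectional category of f : E \<rightarrow> B, infinity if no finite cover exists.\<close>
definition secat :: "'e topology \<Rightarrow> 'b topology \<Rightarrow> ('e \<Rightarrow> 'b) \<Rightarrow> enat" where
  "secat E B f = (INF n \<in> {n. \<exists>U s. (\<forall>i\<le>n. openin B (U i)) \<and> (\<Union>i\<le>n. U i) = topspace B
      \<and> (\<forall>i\<le>n. continuous_map (subtopology B (U i)) E (s i)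
           \<and> homotopic_with (\<lambda>_. True) (subtopology B (U i)) B (f \<circ> s i) id)}. enat n)"

definition TC :: "'a topology \<Rightarrow> enat" where
  "TC Y = secat (path_space Y) (prod_topology Y Y) (\<lambda>\<gamma>. (\<gamma> 0, \<gamma> 1))"

definition TCG :: "('g, 'm) monoid_scheme \<Rightarrow> ('g \<Rightarrow> 'a \<Rightarrow> 'a) \<Rightarrow> 'a topology \<Rightarrow> nat \<Rightarrow> enat" where
  "TCG G act X k = secat (Pk G act X k) (prod_topology X X) (pi_k k)"

definition TCG_inf :: "('g, 'm) monoid_scheme \<Rightarrow> ('g \<Rightarrow> 'a \<Rightarrow> 'a) \<Rightarrow> 'a topology \<Rightarrow> enat" where
  "TCG_inf G act X = (INF k \<in> {1..}. TCG G act X k)"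

end

theory Submission
  imports Defs
begin

lemma topspace_path_space: "topspace (path_space Y) = paths Y"
proof -
  have "paths Y \<in> {{g \<in> paths Y. g ` K \<subseteq> U} | K U. compact K \<and> K \<subseteq> {0..1} \<and> openin Y U}"
    by (rule CollectI, rule exI[of _ "{}"], rule exI[of _ "{}"]) auto
  then show ?thesis unfolding path_space_def topology_generated_by_topspace by blast
qed

lemma paths_in_topspace: "g \<in> paths Y \<Longrightarrow> t \<in> {0..1} \<Longrightarrow> g t \<in> topspace Y"
  unfolding paths_def pathin_def
  using continuous_map_image_subset_topspace by fastforce

lemma cont_to_path_space:
  assumes F: "continuous_map (prod_topology Z (top_of_set {0..1})) Y F"
  shows "continuous_map Z (path_space Y) (\<lambda>z t. if t \<in> {0..1} then F (z,t) else undefined)"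
    (is "continuous_map Z _ ?f")
proof -
  have inp: "?f z \<in> paths Y" if z: "z \<in> topspace Z" for z
  proof -
    have "continuous_map (top_of_set {0..1}) Y (F \<circ> (\<lambda>t. (z,t)))"
      by (rule continuous_map_compose[OF _ F]) (auto intro!: continuous_map_pairwise[THEN iffD2] simp: z o_def)
    then have "pathin Y (?f z)"
      unfolding pathin_def by (rule continuous_map_eq) auto
    then show ?thesis unfolding paths_def by auto
  qed
  show ?thesis unfolding path_space_def
  proof (rule continuous_on_generated_topo)
    fix W assume "W \<in> {{g \<in> paths Y. g ` K \<subseteq> U} | K U. compact K \<and> K \<subseteq> {0..1} \<and> openin Y U}"
    then obtain K U where W: "W = {g \<in> paths Y. g ` K \<subseteq> U}" and K: "compact K" "K \<subseteq> {0..1}"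
      and U: "openin Y U" by blast
    have eq: "?f -` W \<inter> topspace Z = {z \<in> topspace Z. \<forall>t\<in>K. F (z,t) \<in> U}"
    proof (rule Set.set_eqI)
      fix z show "z \<in> ?f -` W \<inter> topspace Z \<longleftrightarrow> z \<in> {z \<in> topspace Z. \<forall>t\<in>K. F (z,t) \<in> U}"
      proof
        assume "z \<in> ?f -` W \<inter> topspace Z"
        then have z: "z \<in> topspace Z" and im: "\<forall>t\<in>K. ?f z t \<in> U" unfolding W by blast+
        have "\<forall>t\<in>K. F (z,t) \<in> U"
        proof
          fix t assume t: "t \<in> K"
          then have "t \<in> {0..1}" using K(2) by blast
          moreover have "?f z t \<in> U" using im t by (rule bspec)
          ultimately show "F (z,t) \<in> U" by simp
        qed
        then show "z \<in> {z \<in> topspace Z. \<forall>t\<in>K. F (z,t) \<in> U}" using z by blast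
      next
        assume "z \<in> {z \<in> topspace Z. \<forall>t\<in>K. F (z,t) \<in> U}"
        then have z: "z \<in> topspace Z" and im: "\<forall>t\<in>K. F (z,t) \<in> U" by blast+
        have "\<forall>t\<in>K. ?f z t \<in> U"
        proof
          fix t assume t: "t \<in> K"
          then have "t \<in> {0..1}" using K(2) by blast
          moreover have "F (z,t) \<in> U" using im t by (rule bspec)
          ultimately show "?f z t \<in> U" by simp
        qed
        then show "z \<in> ?f -` W \<inter> topspace Z" using z inp[OF z] unfolding W by blast
      qed
    qed
    have O: "openin (prod_topology Z (top_of_set {0..1})) {p \<in> topspace (prod_topology Z (top_of_set {0..1})). F p \<in> U}"
      using F U by (simp add: continuous_map_def)
    show "openin Z (?f -` W \<inter> topspace Z)" unfolding eq
    proof (subst openin_subopen, intro ballI)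
      fix z assume z: "z \<in> {z \<in> topspace Z. \<forall>t\<in>K. F (z, t) \<in> U}"
      then have zt: "z \<in> topspace Z" and zK: "\<forall>t\<in>K. F (z, t) \<in> U" by blast+
      have cK: "compactin (top_of_set {0..1}) K" using K by (simp add: compactin_subtopology)
      have sub: "{z} \<times> K \<subseteq> {p \<in> topspace (prod_topology Z (top_of_set {0..1})). F p \<in> U}"
      proof
        fix p assume "p \<in> {z} \<times> K"
        then obtain t where p: "p = (z,t)" and t: "t \<in> K" by blast
        have "t \<in> {0..1}" using t K(2) by blast
        then have "p \<in> topspace (prod_topology Z (top_of_set {0..1}))" using zt p by simp
        moreover have "F p \<in> U" using zK t p by simp
        ultimately show "p \<in> {p \<in> topspace (prod_topology Z (top_of_set {0..1})). F p \<in> U}" by blast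
      qed
      obtain A B where AB: "openin Z A" "openin (top_of_set {0..1}) B" "z \<in> A" "K \<subseteq> B"
         "A \<times> B \<subseteq> {p \<in> topspace (prod_topology Z (top_of_set {0..1})). F p \<in> U}"
        using tube_lemma_right[OF O cK zt sub] by blast
      have "A \<subseteq> {z \<in> topspace Z. \<forall>t\<in>K. F (z, t) \<in> U}"
      proof
        fix a assume a: "a \<in> A"
        have "a \<in> topspace Z" using openin_subset[OF AB(1)] a by blast
        moreover have "\<forall>t\<in>K. F (a, t) \<in> U"
        proof
          fix t assume "t \<in> K"
          then have "(a,t) \<in> A \<times> B" using a AB(4) by blast
          then show "F (a,t) \<in> U" using AB(5) by blast
        qed
        ultimately show "a \<in> {z \<in> topspace Z. \<forall>t\<in>K. F (z, t) \<in> U}" by blast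
      qed
      then show "\<exists>T. openin Z T \<and> z \<in> T \<and> T \<subseteq> {z \<in> topspace Z. \<forall>t\<in>K. F (z, t) \<in> U}"
        using AB(1,3) by blast
    qed
  next
    show "?f ` topspace Z \<subseteq> \<Union> {{g \<in> paths Y. g ` K \<subseteq> U} | K U. compact K \<and> K \<subseteq> {0..1} \<and> openin Y U}"
      using inp topspace_path_space[of Y] unfolding path_space_def topology_generated_by_topspace by blast
  qed
qed

lemma eval_cont: "continuous_map (prod_topology (path_space Y) (top_of_set {0..1})) Y (\<lambda>(g,t). g t)"
proof -
  let ?P = "prod_topology (path_space Y) (top_of_set {0..1::real})"
  have ts: "topspace ?P = paths Y \<times> {0..1}" by (simp add: topspace_path_space)
  show ?thesis unfolding continuous_map_def
  proof (intro conjI allI impI)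
    show "(\<lambda>(g,t). g t) \<in> topspace ?P \<rightarrow> topspace Y" using paths_in_topspace ts by fastforce
  next
    fix V assume V: "openin Y V"
    show "openin ?P {x \<in> topspace ?P. (\<lambda>(g,t). g t) x \<in> V}"
    proof (subst openin_subopen, intro ballI)
      fix x assume x: "x \<in> {x \<in> topspace ?P. (\<lambda>(g,t). g t) x \<in> V}"
      obtain g t where xe: "x = (g,t)" by force
      have g: "g \<in> paths Y" and t: "t \<in> {0..1}" and gt: "g t \<in> V" using x ts xe by auto
      have "continuous_map (top_of_set {0..1}) Y g" using g unfolding paths_def pathin_def by blast
      then have "openin (top_of_set {0..1}) {u \<in> topspace (top_of_set {0..1::real}). g u \<in> V}"
        using V by (simp add: continuous_map_def)
      then have "openin (top_of_set {0..1}) {u \<in> {0..1::real}. g u \<in> V}" by simp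
      then obtain e where e: "e > 0" "\<forall>u\<in>{0..1}. dist u t < e \<longrightarrow> g u \<in> V"
        using t gt unfolding openin_euclidean_subtopology_iff by blast
      define K where "K = cball t (e/2) \<inter> {0..1}"
      define N where "N = {h \<in> paths Y. h ` K \<subseteq> V} \<times> (ball t (e/2) \<inter> {0..1})"
      have cK: "compact K" unfolding K_def by (simp add: compact_Int_closed)
      have o1: "openin (path_space Y) {h \<in> paths Y. h ` K \<subseteq> V}"
        unfolding path_space_def
        by (rule topology_generated_by_Basis) (use cK V in \<open>auto simp: K_def\<close>)
      have o2: "openin (top_of_set {0..1}) (ball t (e/2) \<inter> {0..1})"
        using openin_open_Int[of "ball t (e/2)" "{0..1::real}"] by (simp add: Int_commute)
      have oN: "openin ?P N" unfolding N_def using o1 o2 by (simp add: openin_prod_Times_iff)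
      have gK: "g ` K \<subseteq> V"
      proof
        fix y assume "y \<in> g ` K"
        then obtain u where u: "u \<in> K" "y = g u" by blast
        then have "dist u t < e" using e(1) by (simp add: K_def dist_commute)
        then show "y \<in> V" using e(2) u by (simp add: K_def)
      qed
      have xN: "x \<in> N" unfolding N_def xe using g t gK e(1) by simp
      have "N \<subseteq> {x \<in> topspace ?P. (\<lambda>(g,t). g t) x \<in> V}"
      proof
        fix p assume p: "p \<in> N"
        then obtain h u where pe: "p = (h,u)" and h: "h \<in> paths Y" "h ` K \<subseteq> V"
          and u: "u \<in> ball t (e/2)" "u \<in> {0..1}" unfolding N_def by blast
        have "u \<in> K" using u by (simp add: K_def)
        then have "h u \<in> V" using h by blast
        then show "p \<in> {x \<in> topspace ?P. (\<lambda>(g,t). g t) x \<in> V}" using pe h u ts by simp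
      qed
      then show "\<exists>T. openin ?P T \<and> x \<in> T \<and> T \<subseteq> {x \<in> topspace ?P. (\<lambda>(g,t). g t) x \<in> V}"
        using oN xN by blast
    qed
  qed
qed

lemma openin_orbit_space:
  "openin (orbit_space G act X) U \<longleftrightarrow>
     U \<subseteq> orbit G act ` topspace X \<and> openin X {x \<in> topspace X. orbit G act x \<in> U}"
proof -
  let ?L = "\<lambda>U. U \<subseteq> orbit G act ` topspace X \<and> openin X {x \<in> topspace X. orbit G act x \<in> U}"
  have "istopology ?L" unfolding istopology_def
  proof (rule conjI)
    show "\<forall>S T. ?L S \<longrightarrow> ?L T \<longrightarrow> ?L (S \<inter> T)"
    proof (intro allI impI)
    fix S T assume S: "?L S" and T: "?L T"
    have "{x \<in> topspace X. orbit G act x \<in> S \<inter> T} =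
          {x \<in> topspace X. orbit G act x \<in> S} \<inter> {x \<in> topspace X. orbit G act x \<in> T}" by blast
    moreover have "openin X ({x \<in> topspace X. orbit G act x \<in> S} \<inter> {x \<in> topspace X. orbit G act x \<in> T})"
      using S T by (intro openin_Int) simp_all
    moreover have "S \<inter> T \<subseteq> orbit G act ` topspace X" using S by blast
    ultimately show "?L (S \<inter> T)" by simp
    qed
  next
    show "\<forall>\<K>. (\<forall>K\<in>\<K>. ?L K) \<longrightarrow> ?L (\<Union>\<K>)"
    proof (intro allI impI)
    fix \<K> assume K: "\<forall>K\<in>\<K>. ?L K"
    have "{x \<in> topspace X. orbit G act x \<in> \<Union>\<K>} = (\<Union>K\<in>\<K>. {x \<in> topspace X. orbit G act x \<in> K})" by blast
    moreover have "openin X (\<Union>K\<in>\<K>. {x \<in> topspace X. orbit G act x \<in> K})"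
      using K by (intro openin_Union) blast
    moreover have "\<Union>\<K> \<subseteq> orbit G act ` topspace X" using K by blast
    ultimately show "?L (\<Union>\<K>)" by simp
    qed
  qed
  then have "openin (topology ?L) = ?L" by (rule topology_inverse')
  then have "openin (topology ?L) U = ?L U" by (rule fun_cong)
  then show ?thesis unfolding orbit_space_def .
qed

lemma topspace_orbit_space: "topspace (orbit_space G act X) = orbit G act ` topspace X"
proof
  show "topspace (orbit_space G act X) \<subseteq> orbit G act ` topspace X"
  proof
    fix y assume "y \<in> topspace (orbit_space G act X)"
    then obtain U where "openin (orbit_space G act X) U" "y \<in> U" unfolding topspace_def by blast
    then show "y \<in> orbit G act ` topspace X" unfolding openin_orbit_space by blast
  qed
  have "{x \<in> topspace X. orbit G act x \<in> orbit G act ` topspace X} = topspace X" by blast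
  then have "openin (orbit_space G act X) (orbit G act ` topspace X)"
    by (simp add: openin_orbit_space)
  then show "orbit G act ` topspace X \<subseteq> topspace (orbit_space G act X)"
    by (rule openin_subset)
qed

lemma continuous_orbit_map: "continuous_map X (orbit_space G act X) (orbit G act)"
  unfolding continuous_map_def topspace_orbit_space openin_orbit_space by blast

lemma concat_paths_0: "concat_paths k p 0 = p 0 0"
  unfolding concat_paths_def by (simp add: Let_def)

lemma concat_paths_1: assumes "k > 0" shows "concat_paths k p 1 = p (k-1) 1"
proof -
  have "nat \<lfloor>real k * 1\<rfloor> = k" by simp
  then have m: "min (k - 1) (nat \<lfloor>real k * 1\<rfloor>) = k - 1" by simp
  have r: "real k * 1 - real (k - 1) = 1" using assms by (simp add: of_nat_diff)
  have "(1::real) \<in> {0..1}" by simp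
  then have "concat_paths k p 1 = (let i = min (k - 1) (nat \<lfloor>real k * 1\<rfloor>) in p i (real k * 1 - real i))"
    unfolding concat_paths_def by (simp only: if_True)
  also have "\<dots> = p (k-1) 1" unfolding Let_def m r by (rule refl)
  finally show ?thesis .
qed

lemma theta_ends:
  assumes "k > 0" "theta_k G act k \<gamma> = \<beta>"
  shows "orbit G act (\<gamma> 0 0) = \<beta> 0" "orbit G act (\<gamma> (k-1) 1) = \<beta> 1"
proof -
  have b: "\<beta> = concat_paths k (\<lambda>i. orbit G act \<circ> \<gamma> i)" using assms(2) unfolding theta_k_def by simp
  show "orbit G act (\<gamma> 0 0) = \<beta> 0" unfolding b concat_paths_0 by simp
  show "orbit G act (\<gamma> (k-1) 1) = \<beta> 1" unfolding b concat_paths_1[OF assms(1)] by simp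
qed

definition clamp :: "real \<Rightarrow> real" where "clamp t = max 0 (min 1 t)"

lemma clamp_cont:
  assumes "continuous_map Z euclideanreal f"
  shows "continuous_map Z (top_of_set {0..1}) (\<lambda>x. clamp (f x))"
  unfolding clamp_def using assms
  by (auto simp: continuous_map_in_subtopology intro!: continuous_map_real_max continuous_map_real_min)

lemma clamp_simps: "clamp 0 = 0" "clamp 1 = 1" "t \<le> 0 \<Longrightarrow> clamp t = 0" "t \<ge> 1 \<Longrightarrow> clamp t = 1"
  by (auto simp: clamp_def)

lemma snd_real_cont: "continuous_map (prod_topology Z (top_of_set {0..1::real})) euclideanreal snd"
  by (rule continuous_map_into_fulltopology[OF continuous_map_snd])

lemma affine_snd_cont: "continuous_map (prod_topology Z (top_of_set {0..1::real})) euclideanreal (\<lambda>x. a * snd x + b)"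
  using snd_real_cont by (intro continuous_intros) auto

lemma section_one:
  fixes s :: "(real \<Rightarrow> 'a set) \<Rightarrow> (nat \<Rightarrow> real \<Rightarrow> 'a)"
    and \<sigma> :: "'a set \<times> 'a set \<Rightarrow> real \<Rightarrow> 'a set"
  assumes k: "k > 0"
    and s: "continuous_map (path_space (orbit_space G act X)) (Pk G act X k) s"
    and th: "\<And>\<gamma>. \<gamma> \<in> topspace (path_space (orbit_space G act X))
               \<Longrightarrow> theta_k G act k (s \<gamma>) = \<gamma>"
    and Uo: "openin (prod_topology (orbit_space G act X) (orbit_space G act X)) U"
    and sc: "continuous_map (subtopology (prod_topology (orbit_space G act X) (orbit_space G act X)) U)
               (path_space (orbit_space G act X)) \<sigma>"
    and hom: "homotopic_with (\<lambda>_. True) (subtopology (prod_topology (orbit_space G act X) (orbit_space G act X)) U)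
               (prod_topology (orbit_space G act X) (orbit_space G act X)) ((\<lambda>\<gamma>. (\<gamma> 0, \<gamma> 1)) \<circ> \<sigma>) id"
  defines "V \<equiv> {p \<in> topspace (prod_topology X X). (orbit G act (fst p), orbit G act (snd p)) \<in> U}"
  shows "openin (prod_topology X X) V \<and>
    (\<exists>w. continuous_map (subtopology (prod_topology X X) V) (Pk G act X (k+2)) w \<and>
         homotopic_with (\<lambda>_. True) (subtopology (prod_topology X X) V) (prod_topology X X) (pi_k (k+2) \<circ> w) id)"
proof -
  define Y where "Y = orbit_space G act X"
  define \<rho> where "\<rho> = orbit G act"
  define R where "R = (\<lambda>p::'a\<times>'a. (\<rho> (fst p), \<rho> (snd p)))"
  define Z where "Z = subtopology (prod_topology X X) V"
  define YU where "YU = subtopology (prod_topology Y Y) U"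
  define I where "I = top_of_set {0..1::real}"
  have rho: "continuous_map X Y \<rho>" unfolding Y_def \<rho>_def by (rule continuous_orbit_map)
  have Rc: "continuous_map (prod_topology X X) (prod_topology Y Y) R"
  proof -
    have "continuous_map (prod_topology X X) Y (\<lambda>p. \<rho> (fst p))"
      using continuous_map_compose[OF continuous_map_fst rho] by (simp add: o_def)
    moreover have "continuous_map (prod_topology X X) Y (\<lambda>p. \<rho> (snd p))"
      using continuous_map_compose[OF continuous_map_snd rho] by (simp add: o_def)
    ultimately show ?thesis unfolding R_def by (rule continuous_map_pairedI)
  qed
  have Vo: "openin (prod_topology X X) V"
  proof -
    have "openin (prod_topology X X) {p \<in> topspace (prod_topology X X). R p \<in> U}"
      using Rc Uo Y_def by (simp add: continuous_map_def)
    then show ?thesis unfolding V_def R_def \<rho>_def .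
  qed
  have tZ: "topspace Z = V" unfolding Z_def using V_def by auto
  have RZ: "continuous_map Z YU R"
    unfolding Z_def YU_def continuous_map_in_subtopology
  proof
    show "continuous_map (subtopology (prod_topology X X) V) (prod_topology Y Y) R"
      using Rc by (rule continuous_map_from_subtopology)
    show "R \<in> topspace (subtopology (prod_topology X X) V) \<rightarrow> U"
      using tZ unfolding Z_def V_def R_def \<rho>_def by auto
  qed
  obtain H where Hc: "continuous_map (prod_topology I YU) (prod_topology Y Y) H"
    and H0: "\<And>x. H (0, x) = (\<sigma> x 0, \<sigma> x 1)" and H1: "\<And>x. H (1, x) = x"
    using hom unfolding homotopic_with_def I_def YU_def Y_def by auto
  have scY: "continuous_map YU (path_space Y) \<sigma>" using sc unfolding YU_def Y_def .
  define A where "A = (\<lambda>x::('a\<times>'a)\<times>real. fst (H (clamp (1 - 3 * snd x), R (fst x))))"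
  define M where "M = (\<lambda>x::('a\<times>'a)\<times>real. \<sigma> (R (fst x)) (clamp (3 * snd x - 1)))"
  define C where "C = (\<lambda>x::('a\<times>'a)\<times>real. snd (H (clamp (3 * snd x - 2), R (fst x))))"
  define B where "B = (\<lambda>x::('a\<times>'a)\<times>real. if snd x \<le> 1/3 then A x else if snd x \<le> 2/3 then M x else C x)"
  have cl: "continuous_map (prod_topology Z I) I (\<lambda>x. clamp (a * snd x + b))" for a b
    unfolding I_def by (rule clamp_cont[OF affine_snd_cont])
  have RfZ: "continuous_map (prod_topology Z I) YU (\<lambda>x. R (fst x))"
    using continuous_map_compose[OF continuous_map_fst RZ] by (simp add: o_def)
  have Ac: "continuous_map (prod_topology Z I) Y A"
  proof -
    have "continuous_map (prod_topology Z I) (prod_topology I YU) (\<lambda>x. (clamp (1 - 3 * snd x), R (fst x)))"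
      using cl[of "-3" 1] RfZ by (intro continuous_map_pairedI) (simp_all add: algebra_simps)
    then have "continuous_map (prod_topology Z I) (prod_topology Y Y) (\<lambda>x. H (clamp (1 - 3 * snd x), R (fst x)))"
      using continuous_map_compose[OF _ Hc] by (simp add: o_def)
    then show ?thesis unfolding A_def using continuous_map_fst_of by (simp add: o_def continuous_map_pairwise)
  qed
  have Cc: "continuous_map (prod_topology Z I) Y C"
  proof -
    have "continuous_map (prod_topology Z I) (prod_topology I YU) (\<lambda>x. (clamp (3 * snd x - 2), R (fst x)))"
      using cl[of 3 "-2"] RfZ by (intro continuous_map_pairedI) (simp_all add: algebra_simps)
    then have "continuous_map (prod_topology Z I) (prod_topology Y Y) (\<lambda>x. H (clamp (3 * snd x - 2), R (fst x)))"
      using continuous_map_compose[OF _ Hc] by (simp add: o_def)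
    then show ?thesis unfolding C_def by (simp add: o_def continuous_map_pairwise)
  qed
  have Mc: "continuous_map (prod_topology Z I) Y M"
  proof -
    have "continuous_map (prod_topology Z I) (prod_topology (path_space Y) I) (\<lambda>x. (\<sigma> (R (fst x)), clamp (3 * snd x - 1)))"
      using cl[of 3 "-1"] continuous_map_compose[OF RfZ scY]
      by (intro continuous_map_pairedI) (simp_all add: algebra_simps o_def)
    then have "continuous_map (prod_topology Z I) Y ((\<lambda>(g,t). g t) \<circ> (\<lambda>x. (\<sigma> (R (fst x)), clamp (3 * snd x - 1))))"
      using continuous_map_compose eval_cont unfolding I_def by blast
    then show ?thesis unfolding M_def by (simp add: o_def)
  qed
  have inner: "continuous_map (prod_topology Z I) Y (\<lambda>x. if snd x \<le> 2/3 then M x else C x)"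
  proof (rule continuous_map_cases_le)
    show "continuous_map (prod_topology Z I) euclideanreal snd" unfolding I_def by (rule snd_real_cont)
    show "continuous_map (prod_topology Z I) euclideanreal (\<lambda>x. 2/3)" by simp
    show "continuous_map (subtopology (prod_topology Z I) {x \<in> topspace (prod_topology Z I). snd x \<le> 2 / 3}) Y M"
      using Mc by (rule continuous_map_from_subtopology)
    show "continuous_map (subtopology (prod_topology Z I) {x \<in> topspace (prod_topology Z I). 2 / 3 \<le> snd x}) Y C"
      using Cc by (rule continuous_map_from_subtopology)
  next
    fix x :: "('a\<times>'a)\<times>real" assume "snd x = 2/3"
    then have "clamp (3 * snd x - 1) = 1" "clamp (3 * snd x - 2) = 0" by (simp_all add: clamp_def)
    then show "M x = C x" unfolding M_def C_def by (simp add: H0)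
  qed
  have Bc: "continuous_map (prod_topology Z I) Y B"
    unfolding B_def
  proof (rule continuous_map_cases_le)
    show "continuous_map (prod_topology Z I) euclideanreal snd" unfolding I_def by (rule snd_real_cont)
    show "continuous_map (prod_topology Z I) euclideanreal (\<lambda>x. 1/3)" by simp
    show "continuous_map (subtopology (prod_topology Z I) {x \<in> topspace (prod_topology Z I). snd x \<le> 1 / 3}) Y A"
      using Ac by (rule continuous_map_from_subtopology)
    show "continuous_map (subtopology (prod_topology Z I) {x \<in> topspace (prod_topology Z I). 1 / 3 \<le> snd x}) Y (\<lambda>x. if snd x \<le> 2/3 then M x else C x)"
      using inner by (rule continuous_map_from_subtopology)
  next
    fix x :: "('a\<times>'a)\<times>real" assume "snd x = 1/3"
    then have "clamp (1 - 3 * snd x) = 0" "clamp (3 * snd x - 1) = 0" "snd x \<le> 2/3" by (simp_all add: clamp_def)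
    then show "A x = (if snd x \<le> 2/3 then M x else C x)" unfolding M_def A_def by (simp add: H0)
  qed
  define \<beta> where "\<beta> = (\<lambda>p t. if t \<in> {0..1} then B (p,t) else undefined)"
  have \<beta>c: "continuous_map Z (path_space Y) \<beta>"
    unfolding \<beta>_def using cont_to_path_space[OF Bc[unfolded I_def]] .
  have \<beta>0: "\<beta> p 0 = \<rho> (fst p)" for p
    unfolding \<beta>_def B_def A_def by (simp add: clamp_simps H1 R_def)
  have \<beta>1: "\<beta> p 1 = \<rho> (snd p)" for p
    unfolding \<beta>_def B_def C_def by (simp add: clamp_simps H1 R_def)
  have s\<beta>: "continuous_map Z (Pk G act X k) (\<lambda>p. s (\<beta> p))"
    using continuous_map_compose[OF \<beta>c s[folded Y_def]] by (simp add: o_def)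
  have \<beta>top: "\<beta> p \<in> topspace (path_space Y)" if "p \<in> topspace Z" for p
    using \<beta>c that unfolding continuous_map_def by blast
  have ends: "\<rho> (s (\<beta> p) 0 0) = \<rho> (fst p)" "\<rho> (s (\<beta> p) (k-1) 1) = \<rho> (snd p)" if "p \<in> topspace Z" for p
  proof -
    have "theta_k G act k (s (\<beta> p)) = \<beta> p" using th \<beta>top[OF that] unfolding Y_def by blast
    from theta_ends[OF k this] show "\<rho> (s (\<beta> p) 0 0) = \<rho> (fst p)" "\<rho> (s (\<beta> p) (k-1) 1) = \<rho> (snd p)"
      using \<beta>0 \<beta>1 unfolding \<rho>_def by simp_all
  qed
  have sPk: "s (\<beta> p) \<in> topspace (Pk G act X k)" if "p \<in> topspace Z" for p
    using s\<beta> that unfolding continuous_map_def by blast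
  have chain: "\<rho> (s (\<beta> p) i 1) = \<rho> (s (\<beta> p) (Suc i) 0)" if "p \<in> topspace Z" "Suc i < k" for p i
    using sPk[OF that(1)] that(2) unfolding Pk_def \<rho>_def by simp
  have proj: "continuous_map Z (path_space X) (\<lambda>p. s (\<beta> p) j)" if "j < k" for j
  proof -
    have "continuous_map Z (product_topology (\<lambda>_. path_space X) {..<k}) (\<lambda>p. s (\<beta> p))"
      using s\<beta> unfolding Pk_def by (rule continuous_map_into_fulltopology)
    moreover have "continuous_map (product_topology (\<lambda>_. path_space X) {..<k}) (path_space X) (\<lambda>x. x j)"
      using continuous_map_product_projection[of j "{..<k}" "\<lambda>_. path_space X"] that by simp
    ultimately show ?thesis using continuous_map_compose by (fastforce simp: o_def)
  qed
  define cp where "cp = (\<lambda>x::'a. \<lambda>t::real. if t \<in> {0..1} then x else undefined)"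
  have ZX1: "continuous_map (prod_topology Z I) X (\<lambda>x. fst (fst x))"
  proof -
    have "continuous_map Z X fst" unfolding Z_def by (rule continuous_map_from_subtopology[OF continuous_map_fst])
    then show ?thesis using continuous_map_compose[OF continuous_map_fst] by (fastforce simp: o_def)
  qed
  have ZX2: "continuous_map (prod_topology Z I) X (\<lambda>x. snd (fst x))"
  proof -
    have "continuous_map Z X snd" unfolding Z_def by (rule continuous_map_from_subtopology[OF continuous_map_snd])
    then show ?thesis using continuous_map_compose[OF continuous_map_fst] by (fastforce simp: o_def)
  qed
  have cp1: "continuous_map Z (path_space X) (\<lambda>p. cp (fst p))"
    using cont_to_path_space[OF ZX1[unfolded I_def]] unfolding cp_def fst_conv .
  have cp2: "continuous_map Z (path_space X) (\<lambda>p. cp (snd p))"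
    using cont_to_path_space[OF ZX2[unfolded I_def]] unfolding cp_def fst_conv .
  define w where "w = (\<lambda>p j. if j = 0 then cp (fst p) else if j \<le> k then s (\<beta> p) (j-1)
                          else if j = k+1 then cp (snd p) else undefined)"
  have wprod: "continuous_map Z (product_topology (\<lambda>_. path_space X) {..<k+2}) w"
    unfolding continuous_map_componentwise
  proof
    show "w ` topspace Z \<subseteq> extensional {..<k + 2}"
      unfolding w_def extensional_def by auto
    show "\<forall>j\<in>{..<k + 2}. continuous_map Z (path_space X) (\<lambda>x. w x j)"
    proof
      fix j assume j: "j \<in> {..<k+2}"
      consider "j = 0" | "0 < j" "j \<le> k" | "j = k+1" using j by fastforce
      then show "continuous_map Z (path_space X) (\<lambda>x. w x j)"
      proof cases
        case 1 then show ?thesis unfolding w_def using cp1 by simp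
      next
        case 2
        have "continuous_map Z (path_space X) (\<lambda>p. s (\<beta> p) (j-1))" using proj 2 by simp
        then show ?thesis unfolding w_def using 2 by simp
      next
        case 3 then show ?thesis unfolding w_def using cp2 by simp
      qed
    qed
  qed
  have worb: "w p \<in> {\<gamma>. \<forall>i. Suc i < k+2 \<longrightarrow> orbit G act (\<gamma> i 1) = orbit G act (\<gamma> (Suc i) 0)}"
    if p: "p \<in> topspace Z" for p
  proof (intro CollectI allI impI)
    fix i assume i: "Suc i < k+2"
    consider "i = 0" | "0 < i" "i < k" | "i = k" using i by fastforce
    then show "orbit G act (w p i 1) = orbit G act (w p (Suc i) 0)"
    proof cases
      case 1
      then show ?thesis using ends(1)[OF p] k unfolding w_def cp_def \<rho>_def by simp
    next
      case 2
      have "\<rho> (s (\<beta> p) (i-1) 1) = \<rho> (s (\<beta> p) (Suc (i-1)) 0)" using chain[OF p] 2 by simp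
      then show ?thesis using 2 unfolding w_def \<rho>_def by simp
    next
      case 3
      then show ?thesis using ends(2)[OF p] k unfolding w_def cp_def \<rho>_def by simp
    qed
  qed
  have wc: "continuous_map Z (Pk G act X (k+2)) w"
    unfolding Pk_def continuous_map_in_subtopology using wprod worb by blast
  have pw: "(pi_k (k+2) \<circ> w) p = id p" for p
    unfolding pi_k_def w_def cp_def by (simp add: prod_eq_iff)
  have pwc: "continuous_map Z (prod_topology X X) (pi_k (k+2) \<circ> w)"
    using continuous_map_eq[OF continuous_map_id_subt[of "prod_topology X X" V]] pw unfolding Z_def by metis
  have "homotopic_with (\<lambda>_. True) Z (prod_topology X X) (pi_k (k+2) \<circ> w) id"
    by (rule homotopic_with_equal, simp, simp, rule pwc, rule pw)
  then show ?thesis using Vo wc unfolding Z_def by blast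
qed

theorem mainTheorem3:
  fixes TG :: "'g topology" and G :: "('g, 'm) monoid_scheme"
    and act :: "'g \<Rightarrow> 'a \<Rightarrow> 'a" and X :: "'a topology" and k :: nat
    and s :: "(real \<Rightarrow> 'a set) \<Rightarrow> (nat \<Rightarrow> real \<Rightarrow> 'a)"
  assumes "G_space TG G act X"
    and "k > 0"
    and "continuous_map (path_space (orbit_space G act X)) (Pk G act X k) s"
    and "\<And>\<gamma>. \<gamma> \<in> topspace (path_space (orbit_space G act X))
               \<Longrightarrow> theta_k G act k (s \<gamma>) = \<gamma>"
  shows "TCG G act X (k + 2) \<le> TC (orbit_space G act X)
       \<and> TCG_inf G act X \<le> TC (orbit_space G act X)"
proof -
  let ?Y = "orbit_space G act X"
  have sub: "{n. \<exists>U \<sigma>. (\<forall>i\<le>n. openin (prod_topology ?Y ?Y) (U i)) \<and> (\<Union>i\<le>n. U i) = topspace (prod_topology ?Y ?Y)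
      \<and> (\<forall>i\<le>n. continuous_map (subtopology (prod_topology ?Y ?Y) (U i)) (path_space ?Y) (\<sigma> i)
           \<and> homotopic_with (\<lambda>_. True) (subtopology (prod_topology ?Y ?Y) (U i)) (prod_topology ?Y ?Y) ((\<lambda>\<gamma>. (\<gamma> 0, \<gamma> 1)) \<circ> \<sigma> i) id)}
      \<subseteq> {n. \<exists>V w. (\<forall>i\<le>n. openin (prod_topology X X) (V i)) \<and> (\<Union>i\<le>n. V i) = topspace (prod_topology X X)
      \<and> (\<forall>i\<le>n. continuous_map (subtopology (prod_topology X X) (V i)) (Pk G act X (k+2)) (w i)
           \<and> homotopic_with (\<lambda>_. True) (subtopology (prod_topology X X) (V i)) (prod_topology X X) (pi_k (k+2) \<circ> w i) id)}"
  proof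
    fix n assume "n \<in> {n. \<exists>U \<sigma>. (\<forall>i\<le>n. openin (prod_topology ?Y ?Y) (U i)) \<and> (\<Union>i\<le>n. U i) = topspace (prod_topology ?Y ?Y)
      \<and> (\<forall>i\<le>n. continuous_map (subtopology (prod_topology ?Y ?Y) (U i)) (path_space ?Y) (\<sigma> i)
           \<and> homotopic_with (\<lambda>_. True) (subtopology (prod_topology ?Y ?Y) (U i)) (prod_topology ?Y ?Y) ((\<lambda>\<gamma>. (\<gamma> 0, \<gamma> 1)) \<circ> \<sigma> i) id)}"
    then obtain U \<sigma> where Uo: "\<forall>i\<le>n. openin (prod_topology ?Y ?Y) (U i)"
      and Ucov: "(\<Union>i\<le>n. U i) = topspace (prod_topology ?Y ?Y)"
      and Us: "\<forall>i\<le>n. continuous_map (subtopology (prod_topology ?Y ?Y) (U i)) (path_space ?Y) (\<sigma> i)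
           \<and> homotopic_with (\<lambda>_. True) (subtopology (prod_topology ?Y ?Y) (U i)) (prod_topology ?Y ?Y) ((\<lambda>\<gamma>. (\<gamma> 0, \<gamma> 1)) \<circ> \<sigma> i) id"
      unfolding mem_Collect_eq by iprover
    define V where "V i = {p \<in> topspace (prod_topology X X). (orbit G act (fst p), orbit G act (snd p)) \<in> U i}" for i
    have each: "openin (prod_topology X X) (V i) \<and>
      (\<exists>w. continuous_map (subtopology (prod_topology X X) (V i)) (Pk G act X (k+2)) w \<and>
         homotopic_with (\<lambda>_. True) (subtopology (prod_topology X X) (V i)) (prod_topology X X) (pi_k (k+2) \<circ> w) id)"
      if "i \<le> n" for i
    proof -
      have a: "openin (prod_topology ?Y ?Y) (U i)" using Uo that by simp
      have b: "continuous_map (subtopology (prod_topology ?Y ?Y) (U i)) (path_space ?Y) (\<sigma> i)"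
        using Us that by simp
      have c: "homotopic_with (\<lambda>_. True) (subtopology (prod_topology ?Y ?Y) (U i)) (prod_topology ?Y ?Y) ((\<lambda>\<gamma>. (\<gamma> 0, \<gamma> 1)) \<circ> \<sigma> i) id"
        using Us that by simp
      show ?thesis unfolding V_def by (rule section_one[OF assms(2) assms(3) assms(4) a b c])
    qed
    have "\<forall>i. \<exists>w. i \<le> n \<longrightarrow> continuous_map (subtopology (prod_topology X X) (V i)) (Pk G act X (k+2)) w \<and>
         homotopic_with (\<lambda>_. True) (subtopology (prod_topology X X) (V i)) (prod_topology X X) (pi_k (k+2) \<circ> w) id"
    proof
      fix i show "\<exists>w. i \<le> n \<longrightarrow> continuous_map (subtopology (prod_topology X X) (V i)) (Pk G act X (k+2)) w \<and>
         homotopic_with (\<lambda>_. True) (subtopology (prod_topology X X) (V i)) (prod_topology X X) (pi_k (k+2) \<circ> w) id"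
      proof (cases "i \<le> n")
        case True then show ?thesis using each[OF True] by blast
      qed blast
    qed
    then obtain w where w: "\<forall>i. i \<le> n \<longrightarrow> continuous_map (subtopology (prod_topology X X) (V i)) (Pk G act X (k+2)) (w i) \<and>
         homotopic_with (\<lambda>_. True) (subtopology (prod_topology X X) (V i)) (prod_topology X X) (pi_k (k+2) \<circ> w i) id"
      by metis
    have cov: "(\<Union>i\<le>n. V i) = topspace (prod_topology X X)"
    proof
      show "(\<Union>i\<le>n. V i) \<subseteq> topspace (prod_topology X X)" unfolding V_def by blast
      show "topspace (prod_topology X X) \<subseteq> (\<Union>i\<le>n. V i)"
      proof
        fix p assume p: "p \<in> topspace (prod_topology X X)"
        have "(orbit G act (fst p), orbit G act (snd p)) \<in> topspace (prod_topology ?Y ?Y)"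
        proof -
          have "fst p \<in> topspace X" "snd p \<in> topspace X" using p by auto
          then show ?thesis by (simp add: topspace_orbit_space)
        qed
        then obtain i where "i \<le> n" "(orbit G act (fst p), orbit G act (snd p)) \<in> U i"
          using Ucov by blast
        then show "p \<in> (\<Union>i\<le>n. V i)" using p unfolding V_def by blast
      qed
    qed
    show "n \<in> {n. \<exists>V w. (\<forall>i\<le>n. openin (prod_topology X X) (V i)) \<and> (\<Union>i\<le>n. V i) = topspace (prod_topology X X)
      \<and> (\<forall>i\<le>n. continuous_map (subtopology (prod_topology X X) (V i)) (Pk G act X (k+2)) (w i)
           \<and> homotopic_with (\<lambda>_. True) (subtopology (prod_topology X X) (V i)) (prod_topology X X) (pi_k (k+2) \<circ> w i) id)}"
    proof (rule CollectI, rule exI[of _ V], rule exI[of _ w], intro conjI)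
      show "\<forall>i\<le>n. openin (prod_topology X X) (V i)" using each by blast
      show "(\<Union>i\<le>n. V i) = topspace (prod_topology X X)" by (rule cov)
      show "\<forall>i\<le>n. continuous_map (subtopology (prod_topology X X) (V i)) (Pk G act X (k+2)) (w i)
           \<and> homotopic_with (\<lambda>_. True) (subtopology (prod_topology X X) (V i)) (prod_topology X X) (pi_k (k+2) \<circ> w i) id"
        using w by blast
    qed
  qed
  have key: "TCG G act X (k + 2) \<le> TC ?Y"
    unfolding TCG_def TC_def secat_def
    by (rule INF_superset_mono[OF sub]) simp
  moreover have "TCG_inf G act X \<le> TCG G act X (k+2)"
    unfolding TCG_inf_def by (rule INF_lower) simp
  ultimately show ?thesis by (meson order_trans)
qed

end
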